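(* Let $G$ be an unweighted digraph of order $n$ without loops, with $b$ reciprocal pairs of edges (pairs $\{(i,j),(j,i)\}\subseteq E$), and let $0\le\tau\le1$. Then \[\det\bigl[I-t(\tau B+(1-\tau)W)\bigr]=(1-\tau^2t^2)^{\,b-n}\det M_\tau(t),\] where $M_\tau(t)=I-At+(D-\tau I)\tau t^2+(A-S)\tau^2t^3$.
   Context: $G=(V,E)$ with $V=\{1,\dots,n\}$, $m=\#E$, adjacency matrix $A$, $S=A\circ A^T$, $D=\mathrm{diag}(\mathrm{diag}(A^2))$. The line graph adjacency matrix $W\in\{0,1\}^{m\times m}$ is indexed by edges, with $W_{ef}=1$ iff the target vertex of $e$ equals the source vertex of $f$; equivalently $W=RL^T$ where $L,R\in\{0,1\}^{m\times n}$ are the source and target matrices ($L_{ej}=1$ iff $e=(j,\cdot)$, $R_{ej}=1$ iff $e=(\cdot,j)$). The Hashimoto matrix is $B=W-\Delta$, where $\Delta=W\circ W^T$ (so $\Delta_{ef}=1$ iff $f$ is the reverse edge of $e$); thus $B_{ef}=1$ iff $e=(i,j)$, $f=(j,k)$ with $k\ne i$. *)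

theory Defs
  imports "Jordan_Normal_Form.Determinant"
begin

text \<open>A digraph on the vertex set {0..<n} (vertex i+1 of the paper is i here),
  with edge set E, and a fixed enumeration es of E (distinct, set es = E)
  used to index the rows/columns of edge-indexed matrices.\<close>

definition hadamard :: "real mat \<Rightarrow> real mat \<Rightarrow> real mat" where
  "hadamard X Y = mat (dim_row X) (dim_col X) (\<lambda>(i,j). X $$ (i,j) * Y $$ (i,j))"

definition adj_mat :: "nat \<Rightarrow> (nat \<times> nat) set \<Rightarrow> real mat" where
  "adj_mat n E = mat n n (\<lambda>(i,j). if (i,j) \<in> E then 1 else 0)"

definition S_mat :: "nat \<Rightarrow> (nat \<times> nat) set \<Rightarrow> real mat" where
  "S_mat n E = hadamard (adj_mat n E) (transpose_mat (adj_mat n E))"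

definition D_mat :: "nat \<Rightarrow> (nat \<times> nat) set \<Rightarrow> real mat" where
  "D_mat n E = mat n n (\<lambda>(i,j). if i = j then (adj_mat n E * adj_mat n E) $$ (i,i) else 0)"

definition L_mat :: "nat \<Rightarrow> (nat \<times> nat) list \<Rightarrow> real mat" where
  "L_mat n es = mat (length es) n (\<lambda>(e,j). if fst (es ! e) = j then 1 else 0)"

definition R_mat :: "nat \<Rightarrow> (nat \<times> nat) list \<Rightarrow> real mat" where
  "R_mat n es = mat (length es) n (\<lambda>(e,j). if snd (es ! e) = j then 1 else 0)"

definition W_mat :: "nat \<Rightarrow> (nat \<times> nat) list \<Rightarrow> real mat" where
  "W_mat n es = R_mat n es * transpose_mat (L_mat n es)"

definition Delta_mat :: "nat \<Rightarrow> (nat \<times> nat) list \<Rightarrow> real mat" where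
  "Delta_mat n es = hadamard (W_mat n es) (transpose_mat (W_mat n es))"

definition B_mat :: "nat \<Rightarrow> (nat \<times> nat) list \<Rightarrow> real mat" where
  "B_mat n es = W_mat n es - Delta_mat n es"

definition recip_pairs :: "(nat \<times> nat) set \<Rightarrow> nat" where
  "recip_pairs E = card {p. \<exists>i j. (i,j) \<in> E \<and> (j,i) \<in> E \<and> p = {(i,j),(j,i)}}"

definition M_tau :: "nat \<Rightarrow> (nat \<times> nat) set \<Rightarrow> real \<Rightarrow> real \<Rightarrow> real mat" where
  "M_tau n E \<tau> t = 1\<^sub>m n - t \<cdot>\<^sub>m adj_mat n E
     + (\<tau> * t^2) \<cdot>\<^sub>m (D_mat n E - \<tau> \<cdot>\<^sub>m 1\<^sub>m n)
     + (\<tau>^2 * t^3) \<cdot>\<^sub>m (adj_mat n E - S_mat n E)"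

end

theory Submission
  imports Defs
begin

lemma one_minus_plus_mat: "(A::real mat) \<in> carrier_mat m m \<Longrightarrow> 1\<^sub>m m - A + A = 1\<^sub>m m"
  by (rule eq_matI, auto)
lemma plus_one_minus_mat: "(A::real mat) \<in> carrier_mat m m \<Longrightarrow> A + (1\<^sub>m m - A) = 1\<^sub>m m"
  by (rule eq_matI, auto)

lemma sylvester_det:
  fixes U :: "real mat" and V :: "real mat"
  assumes U: "U \<in> carrier_mat m n" and V: "V \<in> carrier_mat n m"
  shows "det (1\<^sub>m m - U * V) = det (1\<^sub>m n - V * U)"
proof -
  have UV: "U * V \<in> carrier_mat m m" and VU: "V * U \<in> carrier_mat n n" using U V by auto
  let ?T = "four_block_mat (1\<^sub>m m) U V (1\<^sub>m n)"
  have e1: "four_block_mat (1\<^sub>m m) U (0\<^sub>m n m) (1\<^sub>m n) * four_block_mat (1\<^sub>m m - U * V) (0\<^sub>m m n) V (1\<^sub>m n) = ?T"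
    apply (subst mult_four_block_mat[of _ m m _ n _ n _ _ m _ n])
    using U V UV by (auto intro!: cong_four_block_mat simp: one_minus_plus_mat plus_one_minus_mat)
  have e2: "four_block_mat (1\<^sub>m m) (0\<^sub>m m n) V (1\<^sub>m n) * four_block_mat (1\<^sub>m m) U (0\<^sub>m n m) (1\<^sub>m n - V * U) = ?T"
    apply (subst mult_four_block_mat[of _ m m _ n _ n _ _ m _ n])
    using U V VU by (auto intro!: cong_four_block_mat simp: one_minus_plus_mat plus_one_minus_mat)
  have "det ?T = det (1\<^sub>m m - U * V)"
    unfolding e1[symmetric]
    apply (subst det_mult[of _ "m+n"])
      apply (use U V UV in auto)[2]
    apply (subst det_four_block_mat_lower_left_zero[of _ m _ n], use U in auto)
    apply (subst det_four_block_mat_upper_right_zero[of _ m _ n], use U V UV in auto)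
    done
  moreover have "det ?T = det (1\<^sub>m n - V * U)"
    unfolding e2[symmetric]
    apply (subst det_mult[of _ "m+n"])
      apply (use U V VU in auto)[2]
    apply (subst det_four_block_mat_upper_right_zero[of _ m _ n], use V in auto)
    apply (subst det_four_block_mat_lower_left_zero[of _ m _ n], use U V VU in auto)
    done
  ultimately show ?thesis by simp
qed

definition emat :: "(nat\<times>nat) list \<Rightarrow> (nat\<times>nat \<Rightarrow> nat\<times>nat \<Rightarrow> real) \<Rightarrow> real mat" where
  "emat es \<phi> = mat (length es) (length es) (\<lambda>(i,j). \<phi> (es!i) (es!j))"

lemma emat_carrier[simp]: "emat es \<phi> \<in> carrier_mat (length es) (length es)"
  by (simp add: emat_def)
lemma emat_dim[simp]: "dim_row (emat es \<phi>) = length es" "dim_col (emat es \<phi>) = length es"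
  by (simp_all add: emat_def)
lemma emat_index[simp]: "i < length es \<Longrightarrow> j < length es \<Longrightarrow> emat es \<phi> $$ (i,j) = \<phi> (es!i) (es!j)"
  by (simp add: emat_def)

lemma sum_over_nth: assumes "distinct es" shows "(\<Sum>k<length es. f (es!k)) = (\<Sum>x\<in>set es. f x)"
proof -
  have "inj_on (nth es) {..<length es}" using assms by (simp add: inj_on_def nth_eq_iff_index_eq)
  moreover have "nth es ` {..<length es} = set es" by (auto simp: in_set_conv_nth)
  ultimately show ?thesis using sum.reindex[of "nth es" "{..<length es}" f] by simp
qed

lemma prod_over_nth: assumes "distinct es" shows "(\<Prod>k<length es. f (es!k)) = (\<Prod>x\<in>set es. f x)"
proof -
  have "inj_on (nth es) {..<length es}" using assms by (simp add: inj_on_def nth_eq_iff_index_eq)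
  moreover have "nth es ` {..<length es} = set es" by (auto simp: in_set_conv_nth)
  ultimately show ?thesis using prod.reindex[of "nth es" "{..<length es}" f] by simp
qed

lemma emat_mult: assumes "distinct es"
  shows "emat es \<phi> * emat es \<psi> = emat es (\<lambda>x z. \<Sum>y\<in>set es. \<phi> x y * \<psi> y z)"
proof (rule eq_matI)
  fix i j assume i: "i < dim_row (emat es (\<lambda>x z. \<Sum>y\<in>set es. \<phi> x y * \<psi> y z))"
    and j: "j < dim_col (emat es (\<lambda>x z. \<Sum>y\<in>set es. \<phi> x y * \<psi> y z))"
  have "(emat es \<phi> * emat es \<psi>) $$ (i,j) = (\<Sum>k<length es. \<phi> (es!i) (es!k) * \<psi> (es!k) (es!j))"
    using i j by (simp add: scalar_prod_def atLeast0LessThan)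
  also have "\<dots> = (\<Sum>y\<in>set es. \<phi> (es!i) y * \<psi> y (es!j))"
    by (rule sum_over_nth[OF assms])
  finally show "(emat es \<phi> * emat es \<psi>) $$ (i,j) = emat es (\<lambda>x z. \<Sum>y\<in>set es. \<phi> x y * \<psi> y z) $$ (i,j)"
    using i j by simp
qed auto

lemma emat_one: assumes "distinct es"
  shows "1\<^sub>m (length es) = emat es (\<lambda>x y. if x = y then 1 else 0)"
  by (rule eq_matI, use assms in \<open>auto simp: nth_eq_iff_index_eq\<close>)

lemma emat_add: "emat es \<phi> + emat es \<psi> = emat es (\<lambda>x y. \<phi> x y + \<psi> x y)"
  by (rule eq_matI, auto)
lemma emat_minus: "emat es \<phi> - emat es \<psi> = emat es (\<lambda>x y. \<phi> x y - \<psi> x y)"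
  by (rule eq_matI, auto)
lemma emat_smult: "a \<cdot>\<^sub>m emat es \<phi> = emat es (\<lambda>x y. a * \<phi> x y)"
  by (rule eq_matI, auto)

lemma det_emat_id_only:
  assumes d: "distinct es"
   and z: "\<And>p. p permutes {0..<length es} \<Longrightarrow> p \<noteq> id \<Longrightarrow> \<exists>i<length es. \<phi> (es!i) (es!(p i)) = 0"
  shows "det (emat es \<phi>) = (\<Prod>x\<in>set es. \<phi> x x)"
proof -
  let ?n = "length es"
  let ?A = "emat es \<phi>"
  let ?PU = "{p. p permutes {0..<?n}}"
  let ?pp = "\<lambda>p. signof p * (\<Prod> i = 0 ..< ?n. ?A $$ (i, p i))"
  have fPU: "finite ?PU" by (rule finite_permutations, simp)
  have p0: "?pp p = 0" if p: "p \<in> ?PU - {id}" for p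
  proof -
    from p have pU: "p permutes {0..<?n}" and pid: "p \<noteq> id" by auto
    from z[OF pU pid] obtain i where i: "i < ?n" "\<phi> (es!i) (es!(p i)) = 0" by auto
    have pi: "p i < ?n" using pU i(1) by (simp add: permutes_in_image)
    have "(\<Prod> i = 0 ..< ?n. ?A $$ (i, p i)) = 0"
      by (rule prod_zero, simp, rule bexI[of _ i], use i pi in auto)
    thus ?thesis by simp
  qed
  have "det ?A = (\<Sum> p \<in> ?PU. ?pp p)" by (rule det_def'[OF emat_carrier])
  also have "\<dots> = ?pp id + (\<Sum> p \<in> ?PU - {id}. ?pp p)"
    by (rule sum.remove, insert fPU, auto simp: permutes_id)
  also have "(\<Sum> p \<in> ?PU - {id}. ?pp p) = 0"
    by (rule sum.neutral, insert p0, auto)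
  also have "?pp id = (\<Prod>k<?n. \<phi> (es!k) (es!k))" by (simp add: atLeast0LessThan)
  also have "\<dots> = (\<Prod>x\<in>set es. \<phi> x x)" by (rule prod_over_nth[OF d])
  finally show ?thesis by simp
qed

lemma perm_nonid: assumes "p permutes {0..<(m::nat)}" "p \<noteq> id" shows "\<exists>i<m. p i \<noteq> i"
proof (rule ccontr)
  assume "\<not> ?thesis"
  hence "p x = x" for x using assms(1) unfolding permutes_def by (cases "x < m") auto
  with assms(2) show False by auto
qed

lemma det_one_minus_dV:
  assumes d: "distinct es"
    and nl: "\<And>x. x \<in> set es \<Longrightarrow> prod.swap x \<noteq> x"
    and V: "\<And>x. x \<in> set es \<Longrightarrow> V x \<Longrightarrow> \<not> V (prod.swap x)"
  shows "det (emat es (\<lambda>x y. (if x = y then 1 else 0) - c * (if V x \<and> y = prod.swap x then 1 else 0))) = 1"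
proof -
  let ?n = "length es"
  have "det (emat es (\<lambda>x y. (if x = y then 1 else 0) - c * (if V x \<and> y = prod.swap x then 1 else 0)))
     = (\<Prod>x\<in>set es. (if x = x then 1 else 0) - c * (if V x \<and> x = prod.swap x then 1 else 0))"
  proof (rule det_emat_id_only[OF d])
    fix p assume pU: "p permutes {0..<?n}" and pid: "p \<noteq> id"
    from perm_nonid[OF pU pid] obtain i where i: "i < ?n" "p i \<noteq> i" by auto
    define j where "j = p i"
    have j: "j < ?n" using pU i(1) unfolding j_def by (simp add: permutes_in_image)
    have ij: "es ! i \<noteq> es ! j" using i j d unfolding j_def by (simp add: nth_eq_iff_index_eq)
    show "\<exists>i<?n. (if es!i = es!(p i) then 1 else 0) - c * (if V (es!i) \<and> es!(p i) = prod.swap (es!i) then 1 else 0) = 0"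
    proof (cases "V (es!i) \<and> es!j = prod.swap (es!i)")
      case False thus ?thesis using i ij unfolding j_def by (intro exI[of _ i]) auto
    next
      case True
      have ei: "es!i \<in> set es" using i by simp
      have nV: "\<not> V (es!j)" using True V[OF ei] by simp
      have pj: "p j \<noteq> j"
      proof
        assume "p j = j"
        hence "p j = p i" unfolding j_def by simp
        hence "j = i" using permutes_inj[OF pU] by (simp add: inj_eq)
        thus False using i(2) unfolding j_def by simp
      qed
      have pjn: "p j < ?n" using pU j by (simp add: permutes_in_image)
      have "es ! j \<noteq> es ! (p j)" using pj pjn j d by (simp add: nth_eq_iff_index_eq)
      thus ?thesis using nV j by (intro exI[of _ j]) auto
    qed
  qed
  also have "\<dots> = 1" using nl by (intro prod.neutral) auto
  finally show ?thesis .
qed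

lemma emat_cong: "(\<And>x y. x \<in> set es \<Longrightarrow> y \<in> set es \<Longrightarrow> f x y = g x y) \<Longrightarrow> emat es f = emat es g"
  by (rule eq_matI, auto)

lemma emat_mult_row: assumes d: "distinct es"
  shows "emat es (\<lambda>x z. (if z = x then a x else 0) + (if z = prod.swap x then b x else 0)) * emat es \<psi>
   = emat es (\<lambda>x y. a x * \<psi> x y + (if prod.swap x \<in> set es then b x * \<psi> (prod.swap x) y else 0))"
proof -
  have "emat es (\<lambda>x z. (if z = x then a x else 0) + (if z = prod.swap x then b x else 0)) * emat es \<psi>
    = emat es (\<lambda>x y. \<Sum>z\<in>set es. ((if z = x then a x else 0) + (if z = prod.swap x then b x else 0)) * \<psi> z y)"
    by (rule emat_mult[OF d])
  also have "\<dots> = emat es (\<lambda>x y. a x * \<psi> x y + (if prod.swap x \<in> set es then b x * \<psi> (prod.swap x) y else 0))"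
  proof (rule emat_cong)
    fix x y assume x: "x \<in> set es"
    have "(\<Sum>z\<in>set es. ((if z = x then a x else 0) + (if z = prod.swap x then b x else 0)) * \<psi> z y)
      = (\<Sum>z\<in>set es. (if z = x then a x * \<psi> x y else 0) + (if z = prod.swap x then b x * \<psi> (prod.swap x) y else 0))"
      by (rule sum.cong, auto simp: distrib_right)
    also have "\<dots> = a x * \<psi> x y + (if prod.swap x \<in> set es then b x * \<psi> (prod.swap x) y else 0)"
      using x by (simp add: sum.distrib sum.delta')
    finally show "(\<Sum>z\<in>set es. ((if z = x then a x else 0) + (if z = prod.swap x then b x else 0)) * \<psi> z y) = a x * \<psi> x y + (if prod.swap x \<in> set es then b x * \<psi> (prod.swap x) y else 0)" .
  qed
  finally show ?thesis .
qed

lemma W_emat: assumes "set es \<subseteq> {0..<n} \<times> {0..<n}"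
  shows "W_mat n es = emat es (\<lambda>x y. if snd x = fst y then 1 else 0)"
proof (rule eq_matI)
  fix i j assume i: "i < dim_row (emat es (\<lambda>x y. if snd x = fst y then 1 else 0 :: real))"
    and j: "j < dim_col (emat es (\<lambda>x y. if snd x = fst y then 1 else 0 :: real))"
  have i': "i < length es" using i by simp
  have j': "j < length es" using j by simp
  have "es!i \<in> set es" using i' by simp
  hence sn: "snd (es!i) < n" using assms by (auto simp: mem_Times_iff)
  have "W_mat n es $$ (i,j) = (\<Sum>k\<in>{0..<n}. (if snd (es!i) = k then 1 else 0) * (if fst (es!j) = k then 1 else 0 :: real))"
    unfolding W_mat_def R_mat_def L_mat_def using i' j' by (simp add: scalar_prod_def)
  also have "\<dots> = (\<Sum>k\<in>{0..<n}. (if k = snd (es!i) then (if fst (es!j) = snd (es!i) then 1 else 0) else 0))"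
    by (rule sum.cong) simp_all
  also have "\<dots> = (if snd (es!i) = fst (es!j) then 1 else 0)" using sn by simp
  also have "\<dots> = emat es (\<lambda>x y. if snd x = fst y then 1 else 0) $$ (i,j)" using i' j' by simp
  finally show "W_mat n es $$ (i,j) = emat es (\<lambda>x y. if snd x = fst y then 1 else 0) $$ (i,j)" .
qed (simp_all add: W_mat_def R_mat_def L_mat_def)

lemma W_carrier: "W_mat n es \<in> carrier_mat (length es) (length es)"
  unfolding carrier_mat_def W_mat_def R_mat_def L_mat_def by simp

lemma Delta_emat: assumes "set es \<subseteq> {0..<n} \<times> {0..<n}"
  shows "Delta_mat n es = emat es (\<lambda>x y. if y = prod.swap x then 1 else 0)"
proof -
  have W: "W_mat n es = emat es (\<lambda>x y. if snd x = fst y then 1 else 0)" by (rule W_emat[OF assms])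
  show ?thesis unfolding Delta_mat_def hadamard_def W
  proof (rule eq_matI)
    fix i j assume i: "i < dim_row (emat es (\<lambda>x y. if y = prod.swap x then 1 else 0 :: real))"
      and j: "j < dim_col (emat es (\<lambda>x y. if y = prod.swap x then 1 else 0 :: real))"
    have i': "i < length es" using i by simp
    have j': "j < length es" using j by simp
    have "mat (dim_row (emat es (\<lambda>x y. if snd x = fst y then 1 else 0)))
       (dim_col (emat es (\<lambda>x y. if snd x = fst y then 1 else 0)))
       (\<lambda>(i, j). emat es (\<lambda>x y. if snd x = fst y then 1 else 0) $$ (i, j) *
           (emat es (\<lambda>x y. if snd x = fst y then 1 else 0))\<^sup>T $$ (i, j)) $$ (i, j)
      = (if snd (es!i) = fst (es!j) then 1 else 0) * (if snd (es!j) = fst (es!i) then 1 else 0)"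
      using i' j' by simp
    also have "\<dots> = (if es!j = prod.swap (es!i) then 1 else 0)"
      by (cases "es!i"; cases "es!j") simp
    also have "\<dots> = emat es (\<lambda>x y. if y = prod.swap x then 1 else 0) $$ (i,j)" using i' j' by simp
    finally show "mat (dim_row (emat es (\<lambda>x y. if snd x = fst y then 1 else 0)))
       (dim_col (emat es (\<lambda>x y. if snd x = fst y then 1 else 0)))
       (\<lambda>(i, j). emat es (\<lambda>x y. if snd x = fst y then 1 else 0) $$ (i, j) *
           (emat es (\<lambda>x y. if snd x = fst y then 1 else 0))\<^sup>T $$ (i, j)) $$ (i, j)
      = emat es (\<lambda>x y. if y = prod.swap x then 1 else 0) $$ (i,j)" .
  qed simp_all
qed

lemma det_X:
  assumes d: "distinct es" and nl: "\<And>x. x \<in> set es \<Longrightarrow> prod.swap x \<noteq> x"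
  shows "det (emat es (\<lambda>x z. (if z = x then 1 else 0) + (if z = prod.swap x then c else 0)))
    = (1 - c^2) ^ card {x\<in>set es. fst x < snd x \<and> prod.swap x \<in> set es}"
proof -
  let ?X = "emat es (\<lambda>x z. (if z = x then 1 else 0) + (if z = prod.swap x then c else 0))"
  define V where "V = (\<lambda>x::nat\<times>nat. fst x < snd x)"
  let ?U1 = "emat es (\<lambda>x z. (if z = x then 1 else 0) + (if z = prod.swap x then - c * (if V x then 1 else 0) else 0))"
  let ?U2 = "emat es (\<lambda>x z. (if z = x then 1 else 0) + (if z = prod.swap x then - c * (if \<not> V x then 1 else 0) else 0))"
  let ?P1 = "emat es (\<lambda>x z. (if z = x then 1 - c^2 * (if V x \<and> prod.swap x \<in> set es then 1 else 0) else 0) + (if z = prod.swap x then c * (if \<not> V x then 1 else 0) else 0))"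
  let ?Dg = "emat es (\<lambda>x z. (if x = z then 1 - c^2 * (if V x \<and> prod.swap x \<in> set es then 1 else 0) else 0))"
  have nl': "\<And>x. x \<in> set es \<Longrightarrow> fst x \<noteq> snd x" using nl by (force simp: prod_eq_iff)
  have dU1: "det ?U1 = 1"
  proof -
    have "?U1 = emat es (\<lambda>x y. (if x = y then 1 else 0) - c * (if V x \<and> y = prod.swap x then 1 else 0))"
      by (rule emat_cong, use nl in auto)
    also have "det \<dots> = 1" by (rule det_one_minus_dV[OF d nl], auto simp: V_def)
    finally show ?thesis .
  qed
  have dU2: "det ?U2 = 1"
  proof -
    have "?U2 = emat es (\<lambda>x y. (if x = y then 1 else 0) - c * (if (\<lambda>x. \<not> V x) x \<and> y = prod.swap x then 1 else 0))"
      by (rule emat_cong, use nl in auto)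
    also have "det \<dots> = 1" apply (rule det_one_minus_dV[OF d nl]) using nl' by (auto simp: V_def) blast
    finally show ?thesis .
  qed
  have e1: "?U1 * ?X = ?P1"
    unfolding emat_mult_row[OF d]
    apply (rule emat_cong)
    subgoal for x y using nl[of x]
      by (cases "y = x"; cases "y = prod.swap x"; cases "prod.swap x \<in> set es"; cases "V x"; simp add: power2_eq_square)
    done
  have e2: "?P1 * ?U2 = ?Dg"
    unfolding emat_mult_row[OF d]
    apply (rule emat_cong)
    subgoal for x y
    proof -
      assume x: "x \<in> set es" and y: "y \<in> set es"
      have nV: "V x \<Longrightarrow> \<not> V (prod.swap x)" "\<not> V x \<Longrightarrow> V (prod.swap x)"
        using nl'[OF x] by (auto simp: V_def)
      show ?thesis
        using nl[OF x] nV y by (cases "y = x"; cases "y = prod.swap x"; cases "prod.swap x \<in> set es"; cases "V x"; simp)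
    qed
    done
  have "det ?Dg = (\<Prod>x\<in>set es. (if x = x then 1 - c^2 * (if V x \<and> prod.swap x \<in> set es then 1 else 0) else 0))"
  proof (rule det_emat_id_only[OF d])
    fix p assume pU: "p permutes {0..<length es}" and pid: "p \<noteq> id"
    from perm_nonid[OF pU pid] obtain i where i: "i < length es" "p i \<noteq> i" by auto
    have "p i < length es" using pU i(1) by (simp add: permutes_in_image)
    hence "es ! i \<noteq> es ! (p i)" using i d by (simp add: nth_eq_iff_index_eq)
    thus "\<exists>i<length es. (if es ! i = es ! (p i) then 1 - c^2 * (if V (es!i) \<and> prod.swap (es!i) \<in> set es then 1 else 0) else 0) = 0"
      using i by auto
  qed
  also have "\<dots> = (\<Prod>x\<in>set es. (if V x \<and> prod.swap x \<in> set es then 1 - c^2 else 1))"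
    by (rule prod.cong, auto)
  also have "\<dots> = (1 - c^2) ^ card {x\<in>set es. fst x < snd x \<and> prod.swap x \<in> set es}"
    by (simp add: prod.If_cases V_def Int_def conj_commute)
  finally have dD: "det ?Dg = (1 - c^2) ^ card {x\<in>set es. fst x < snd x \<and> prod.swap x \<in> set es}" .
  have C: "?U1 \<in> carrier_mat (length es) (length es)" "?X \<in> carrier_mat (length es) (length es)"
    "?U2 \<in> carrier_mat (length es) (length es)" by auto
  have "det ?Dg = det (?U1 * ?X * ?U2)" using e1 e2 by simp
  also have "\<dots> = det ?U1 * det ?X * det ?U2"
    using det_mult[OF C(1) C(2)] det_mult[OF mult_carrier_mat[OF C(1) C(2)] C(3)] by simp
  finally have F: "det ?Dg = det ?U1 * det ?X * det ?U2" .
  hence "det ?Dg = det ?X" unfolding dU1 dU2 by simp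
  thus ?thesis using dD by simp
qed

lemma emat_mult_row_R: assumes d: "distinct es"
  shows "emat es (\<lambda>x z. (if z = x then a x else 0) + (if z = prod.swap x then b x else 0)) * mat (length es) k (\<lambda>(f,j). \<psi> (es!f) j)
   = mat (length es) k (\<lambda>(e,j). a (es!e) * \<psi> (es!e) j + (if prod.swap (es!e) \<in> set es then b (es!e) * \<psi> (prod.swap (es!e)) j else 0))"
proof (rule eq_matI)
  fix i j assume i: "i < dim_row (mat (length es) k (\<lambda>(e,j). a (es!e) * \<psi> (es!e) j + (if prod.swap (es!e) \<in> set es then b (es!e) * \<psi> (prod.swap (es!e)) j else 0)))"
    and j: "j < dim_col (mat (length es) k (\<lambda>(e,j). a (es!e) * \<psi> (es!e) j + (if prod.swap (es!e) \<in> set es then b (es!e) * \<psi> (prod.swap (es!e)) j else 0)))"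
  have i': "i < length es" using i by simp
  have j': "j < k" using j by simp
  define x where "x = es!i"
  have x: "x \<in> set es" using i' unfolding x_def by simp
  have "(emat es (\<lambda>x z. (if z = x then a x else 0) + (if z = prod.swap x then b x else 0)) * mat (length es) k (\<lambda>(f,j). \<psi> (es!f) j)) $$ (i,j)
     = (\<Sum>f<length es. ((if es!f = x then a x else 0) + (if es!f = prod.swap x then b x else 0)) * \<psi> (es!f) j)"
    using i' j' unfolding x_def by (simp add: scalar_prod_def atLeast0LessThan)
  also have "\<dots> = (\<Sum>z\<in>set es. ((if z = x then a x else 0) + (if z = prod.swap x then b x else 0)) * \<psi> z j)"
    by (rule sum_over_nth[OF d])
  also have "\<dots> = (\<Sum>z\<in>set es. (if z = x then a x * \<psi> x j else 0) + (if z = prod.swap x then b x * \<psi> (prod.swap x) j else 0))"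
    by (rule sum.cong) (simp_all add: distrib_right)
  also have "\<dots> = a x * \<psi> x j + (if prod.swap x \<in> set es then b x * \<psi> (prod.swap x) j else 0)"
    using x by (simp add: sum.distrib)
  also have "\<dots> = mat (length es) k (\<lambda>(e,j). a (es!e) * \<psi> (es!e) j + (if prod.swap (es!e) \<in> set es then b (es!e) * \<psi> (prod.swap (es!e)) j else 0)) $$ (i,j)"
    using i' j' unfolding x_def by simp
  finally show "(emat es (\<lambda>x z. (if z = x then a x else 0) + (if z = prod.swap x then b x else 0)) * mat (length es) k (\<lambda>(f,j). \<psi> (es!f) j)) $$ (i,j)
     = mat (length es) k (\<lambda>(e,j). a (es!e) * \<psi> (es!e) j + (if prod.swap (es!e) \<in> set es then b (es!e) * \<psi> (prod.swap (es!e)) j else 0)) $$ (i,j)" .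
qed simp_all

lemma XY_one:
  fixes c :: real
  assumes d: "distinct es" and nl: "\<And>x. x \<in> set es \<Longrightarrow> prod.swap x \<noteq> x" and q: "1 - c^2 \<noteq> 0"
  shows "emat es (\<lambda>x z. (if z = x then 1 else 0) + (if z = prod.swap x then c else 0)) *
    emat es (\<lambda>x z. (if z = x then 1 + c^2/(1-c^2) * (if prod.swap x \<in> set es then 1 else 0) else 0) + (if z = prod.swap x then - c/(1-c^2) else 0))
    = 1\<^sub>m (length es)"
  unfolding emat_mult_row[OF d] emat_one[OF d]
proof (rule emat_cong)
  fix x y assume x: "x \<in> set es" and y: "y \<in> set es"
  have k1: "1 + c^2/(1-c^2) + c * (- c / (1 - c^2)) = 1" using q by (simp add: field_simps power2_eq_square)
  have k2: "- c/(1-c^2) + c * (1 + c^2/(1-c^2)) = 0" using q by (simp add: field_simps power2_eq_square)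
  show "1 * ((if y = x then 1 + c^2/(1-c^2) * (if prod.swap x \<in> set es then 1 else 0) else 0) + (if y = prod.swap x then - c/(1-c^2) else 0)) +
     (if prod.swap x \<in> set es then c * ((if y = prod.swap x then 1 + c^2/(1-c^2) * (if prod.swap (prod.swap x) \<in> set es then 1 else 0) else 0) + (if y = prod.swap (prod.swap x) then - c/(1-c^2) else 0)) else 0)
    = (if x = y then 1 else 0)"
    using nl[OF x] x y k1 k2 by (cases "y = x"; cases "y = prod.swap x"; cases "prod.swap x \<in> set es"; simp)
qed

lemma sum_if_const: "finite A \<Longrightarrow> (\<Sum>x\<in>A. if P x then (k::real) else 0) = k * real (card {x\<in>A. P x})"
  by (simp add: sum.inter_filter[symmetric])

lemma cnt_lemma:
  fixes E :: "(nat\<times>nat) set"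
  assumes EE: "E \<subseteq> {0..<n} \<times> {0..<n}"
  shows "(\<Sum>k\<in>{0..<n}. (if (i,k) \<in> E then 1 else 0) * (if (k,i) \<in> E then 1 else 0 :: real))
     = real (card {x\<in>E. fst x = i \<and> prod.swap x \<in> E})"
proof -
  have "(\<Sum>k\<in>{0..<n}. (if (i,k) \<in> E then 1 else 0) * (if (k,i) \<in> E then 1 else 0 :: real))
     = (\<Sum>k\<in>{0..<n}. if (i,k) \<in> E \<and> (k,i) \<in> E then 1 else 0)"
    by (rule sum.cong) simp_all
  also have "\<dots> = real (card {k\<in>{0..<n}. (i,k) \<in> E \<and> (k,i) \<in> E})"
    by (subst sum_if_const) simp_all
  also have "card {k\<in>{0..<n}. (i,k) \<in> E \<and> (k,i) \<in> E} = card {x\<in>E. fst x = i \<and> prod.swap x \<in> E}"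
  proof -
    have "{x\<in>E. fst x = i \<and> prod.swap x \<in> E} = (\<lambda>k. (i,k)) ` {k\<in>{0..<n}. (i,k) \<in> E \<and> (k,i) \<in> E}"
    proof (intro equalityI subsetI)
      fix x assume x: "x \<in> {x\<in>E. fst x = i \<and> prod.swap x \<in> E}"
      obtain u v where uv: "x = (u,v)" by (cases x)
      have "(u,v) \<in> E" "u = i" "(v,u) \<in> E" using x uv by auto
      moreover have "v < n" using EE \<open>(u,v) \<in> E\<close> by auto
      ultimately show "x \<in> (\<lambda>k. (i,k)) ` {k\<in>{0..<n}. (i,k) \<in> E \<and> (k,i) \<in> E}"
        unfolding uv by (intro image_eqI[of _ _ v]) simp_all
    next
      fix x assume "x \<in> (\<lambda>k. (i,k)) ` {k\<in>{0..<n}. (i,k) \<in> E \<and> (k,i) \<in> E}"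
      then obtain k where "x = (i,k)" "(i,k) \<in> E" "(k,i) \<in> E" by blast
      thus "x \<in> {x\<in>E. fst x = i \<and> prod.swap x \<in> E}" by simp
    qed
    thus ?thesis by (simp add: card_image inj_on_def)
  qed
  finally show ?thesis by simp
qed

lemma adj_carrier: "adj_mat n E \<in> carrier_mat n n" unfolding adj_mat_def by simp
lemma adj_index: "i < n \<Longrightarrow> j < n \<Longrightarrow> adj_mat n E $$ (i,j) = (if (i,j) \<in> E then 1 else 0)"
  by (simp add: adj_mat_def)
lemma S_carrier: "S_mat n E \<in> carrier_mat n n" unfolding S_mat_def hadamard_def adj_mat_def by simp
lemma S_index: "i < n \<Longrightarrow> j < n \<Longrightarrow> S_mat n E $$ (i,j) = (if (i,j) \<in> E \<and> (j,i) \<in> E then 1 else 0)"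
  by (simp add: S_mat_def hadamard_def adj_mat_def)
lemma D_carrier: "D_mat n E \<in> carrier_mat n n" unfolding D_mat_def by simp
lemma D_index:
  assumes EE: "E \<subseteq> {0..<n} \<times> {0..<n}" and i: "i < n" and j: "j < n"
  shows "D_mat n E $$ (i,j) = (if i = j then real (card {x\<in>E. fst x = i \<and> prod.swap x \<in> E}) else 0)"
proof -
  have "(adj_mat n E * adj_mat n E) $$ (i,i) = (\<Sum>k\<in>{0..<n}. (if (i,k) \<in> E then 1 else 0) * (if (k,i) \<in> E then 1 else 0 :: real))"
    using i by (simp add: adj_mat_def scalar_prod_def)
  also have "\<dots> = real (card {x\<in>E. fst x = i \<and> prod.swap x \<in> E})" by (rule cnt_lemma[OF EE])
  finally have AA: "(adj_mat n E * adj_mat n E) $$ (i,i) = real (card {x\<in>E. fst x = i \<and> prod.swap x \<in> E})" .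
  show ?thesis using i j AA by (cases "i = j") (simp_all add: D_mat_def)
qed

lemma scal:
  fixes \<tau> t dl a b cn :: real
  assumes q: "1 - (\<tau>*t)^2 \<noteq> 0"
  shows "dl - t * a + \<tau> * (t*t) * (dl * cn - \<tau> * dl) + (\<tau>*\<tau>) * (t*t*t) * (a - a * b)
    = (1 - (\<tau>*t)^2) * (dl - t * (a * (1 + (\<tau>*t)^2/(1-(\<tau>*t)^2) * b) + dl * (- (\<tau>*t)/(1-(\<tau>*t)^2) * cn)))"
proof -
  define q where "q = 1 - (\<tau>*t)^2"
  have q0: "q \<noteq> 0" using q by (simp add: q_def)
  have A: "q * ((\<tau>*t)^2/q) = (\<tau>*t)^2" using q0 by simp
  have B: "q * ((\<tau>*t)/q) = \<tau>*t" using q0 by simp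
  have "(1 - (\<tau>*t)^2) * (dl - t * (a * (1 + (\<tau>*t)^2/(1-(\<tau>*t)^2) * b) + dl * (- (\<tau>*t)/(1-(\<tau>*t)^2) * cn)))
     = q * dl - q * t * a - t * a * b * (q * ((\<tau>*t)^2/q)) + t * dl * cn * (q * ((\<tau>*t)/q))"
    unfolding q_def[symmetric] by (simp add: algebra_simps)
  also have "\<dots> = q * dl - q * t * a - t * a * b * (\<tau>*t)^2 + t * dl * cn * (\<tau>*t)" unfolding A B ..
  also have "\<dots> = dl - t * a + \<tau> * (t*t) * (dl * cn - \<tau> * dl) + (\<tau>*\<tau>) * (t*t*t) * (a - a * b)"
    unfolding q_def by (simp add: algebra_simps power2_eq_square)
  finally show ?thesis by simp
qed
lemma Mtau_eq:
  fixes E :: "(nat\<times>nat) set" and K :: "real mat"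
  assumes EE: "E \<subseteq> {0..<n} \<times> {0..<n}" and K: "K \<in> carrier_mat n n"
    and q: "1 - (\<tau>*t)^2 \<noteq> 0"
    and Kij: "\<And>i j. i < n \<Longrightarrow> j < n \<Longrightarrow> K $$ (i,j) =
        (if (i,j) \<in> E then 1 + (\<tau>*t)^2/(1-(\<tau>*t)^2) * (if (j,i) \<in> E then 1 else 0) else 0)
        + (if i = j then - (\<tau>*t)/(1-(\<tau>*t)^2) * real (card {x\<in>E. fst x = i \<and> prod.swap x \<in> E}) else 0)"
  shows "M_tau n E \<tau> t = (1 - (\<tau>*t)^2) \<cdot>\<^sub>m (1\<^sub>m n - t \<cdot>\<^sub>m K)"
proof (rule eq_matI)
  fix i j assume i: "i < dim_row ((1 - (\<tau>*t)^2) \<cdot>\<^sub>m (1\<^sub>m n - t \<cdot>\<^sub>m K))"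
    and j: "j < dim_col ((1 - (\<tau>*t)^2) \<cdot>\<^sub>m (1\<^sub>m n - t \<cdot>\<^sub>m K))"
  have i': "i < n" using i K by simp
  have j': "j < n" using j K by simp
  define cn where "cn = real (card {x\<in>E. fst x = i \<and> prod.swap x \<in> E})"
  define dl where "dl = (if i = j then 1 else 0 :: real)"
  define a where "a = (if (i,j) \<in> E then 1 else 0 :: real)"
  define b where "b = (if (j,i) \<in> E then 1 else 0 :: real)"
  have lhs: "M_tau n E \<tau> t $$ (i,j) = dl - t * a + \<tau> * (t*t) * (dl * cn - \<tau> * dl) + (\<tau>*\<tau>) * (t*t*t) * (a - a * b)"
    unfolding M_tau_def using i' j' adj_carrier[of n E] S_carrier[of n E] D_carrier[of n E]
    by (simp add: adj_index S_index D_index[OF EE] cn_def[symmetric] dl_def a_def b_def power2_eq_square power3_eq_cube;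
        cases "i = j"; cases "(i,j) \<in> E"; cases "(j,i) \<in> E"; simp add: algebra_simps cn_def)
  have rhs: "((1 - (\<tau>*t)^2) \<cdot>\<^sub>m (1\<^sub>m n - t \<cdot>\<^sub>m K)) $$ (i,j) = (1 - (\<tau>*t)^2) * (dl - t * (a * (1 + (\<tau>*t)^2/(1-(\<tau>*t)^2) * b) + dl * (- (\<tau>*t)/(1-(\<tau>*t)^2) * cn)))"
    using i' j' K by (simp add: Kij cn_def[symmetric] dl_def a_def b_def; cases "i = j"; cases "(i,j) \<in> E"; cases "(j,i) \<in> E"; simp add: cn_def)
  show "M_tau n E \<tau> t $$ (i,j) = ((1 - (\<tau>*t)^2) \<cdot>\<^sub>m (1\<^sub>m n - t \<cdot>\<^sub>m K)) $$ (i,j)"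
    unfolding lhs rhs by (rule scal[OF q])
qed (use K S_carrier[of n E] in \<open>simp_all add: M_tau_def adj_carrier\<close>)

lemma card_recip:
  fixes E :: "(nat\<times>nat) set" assumes nl: "\<forall>i. (i,i) \<notin> E" and f: "finite E"
  shows "card {x\<in>E. fst x < snd x \<and> prod.swap x \<in> E} = recip_pairs E"
proof -
  let ?A = "{x\<in>E. fst x < snd x \<and> prod.swap x \<in> E}"
  let ?g = "\<lambda>x::nat\<times>nat. {x, prod.swap x}"
  have inj: "inj_on ?g ?A"
  proof (rule inj_onI)
    fix x y assume x: "x \<in> ?A" and y: "y \<in> ?A" and eq: "?g x = ?g y"
    have "x = y \<or> x = prod.swap y" using eq by (auto simp: doubleton_eq_iff)
    thus "x = y" using x y by (auto simp: prod_eq_iff)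
  qed
  have img1: "?g ` ?A \<subseteq> {p. \<exists>i j. (i,j) \<in> E \<and> (j,i) \<in> E \<and> p = {(i,j),(j,i)}}"
    by force
  have img2: "p \<in> ?g ` ?A" if "p \<in> {p. \<exists>i j. (i,j) \<in> E \<and> (j,i) \<in> E \<and> p = {(i,j),(j,i)}}" for p
  proof -
    from that obtain i j where ij: "(i,j) \<in> E" "(j,i) \<in> E" "p = {(i,j),(j,i)}" by auto
    have "i \<noteq> j" using ij nl by auto
    show "p \<in> ?g ` ?A"
    proof (cases "i < j")
      case True thus ?thesis using ij by (intro image_eqI[of _ _ "(i,j)"]) auto
    next
      case False hence "j < i" using \<open>i \<noteq> j\<close> by simp
      thus ?thesis using ij by (intro image_eqI[of _ _ "(j,i)"]) auto
    qed
  qed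
  have img: "?g ` ?A = {p. \<exists>i j. (i,j) \<in> E \<and> (j,i) \<in> E \<and> p = {(i,j),(j,i)}}"
    using img1 img2 by blast
  show ?thesis unfolding recip_pairs_def img[symmetric] using card_image[OF inj] by simp
qed

lemma K_value:
  fixes E :: "(nat\<times>nat) set" and \<alpha> \<beta> :: real
  assumes f: "finite E"
  shows "(\<Sum>x\<in>E. (if fst x = i then 1 else 0) * ((1 + \<beta> * (if prod.swap x \<in> E then 1 else 0)) * (if snd x = j then 1 else 0)
      + (if prod.swap x \<in> E then \<alpha> * (if snd (prod.swap x) = j then 1 else 0) else 0)))
    = (if (i,j) \<in> E then 1 + \<beta> * (if (j,i) \<in> E then 1 else 0) else 0)
      + (if i = j then \<alpha> * real (card {x\<in>E. fst x = i \<and> prod.swap x \<in> E}) else 0)"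
proof -
  have "(\<Sum>x\<in>E. (if fst x = i then 1 else 0) * ((1 + \<beta> * (if prod.swap x \<in> E then 1 else 0)) * (if snd x = j then 1 else 0)
      + (if prod.swap x \<in> E then \<alpha> * (if snd (prod.swap x) = j then 1 else 0) else 0)))
    = (\<Sum>x\<in>E. (if x = (i,j) then 1 + \<beta> * (if (j,i) \<in> E then 1 else 0) else 0)
         + (if fst x = i \<and> prod.swap x \<in> E then (if i = j then \<alpha> else 0) else 0))"
  proof (rule sum.cong)
    fix x :: "nat \<times> nat" assume "x \<in> E"
    show "(if fst x = i then 1 else 0) * ((1 + \<beta> * (if prod.swap x \<in> E then 1 else 0)) * (if snd x = j then 1 else 0)
      + (if prod.swap x \<in> E then \<alpha> * (if snd (prod.swap x) = j then 1 else 0) else 0))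
      = (if x = (i,j) then 1 + \<beta> * (if (j,i) \<in> E then 1 else 0) else 0)
         + (if fst x = i \<and> prod.swap x \<in> E then (if i = j then \<alpha> else 0) else 0)"
      by (cases x) auto
  qed simp
  also have "\<dots> = (if (i,j) \<in> E then 1 + \<beta> * (if (j,i) \<in> E then 1 else 0) else 0)
      + (if i = j then \<alpha> else 0) * real (card {x\<in>E. fst x = i \<and> prod.swap x \<in> E})"
    using f by (simp add: sum.distrib sum_if_const)
  finally show ?thesis by simp
qed

theorem theorem4p9:
  fixes n :: nat and E :: "(nat \<times> nat) set" and es :: "(nat \<times> nat) list"
    and \<tau> t :: real
  assumes "E \<subseteq> {0..<n} \<times> {0..<n}"
    and "\<forall>i. (i,i) \<notin> E"
    and "distinct es" and "set es = E"
    and "0 \<le> \<tau>" and "\<tau> \<le> 1"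
    and "1 - \<tau>^2 * t^2 \<noteq> 0"
  shows "det (1\<^sub>m (length es) - t \<cdot>\<^sub>m (\<tau> \<cdot>\<^sub>m B_mat n es + (1 - \<tau>) \<cdot>\<^sub>m W_mat n es))
       = (1 - \<tau>^2 * t^2) powi (int (recip_pairs E) - int n) * det (M_tau n E \<tau> t)"
proof -
  let ?m = "length es"
  define c where "c = \<tau> * t"
  define q where "q = 1 - c^2"
  have q_eq: "1 - \<tau>^2 * t^2 = q" by (simp add: q_def c_def power_mult_distrib)
  have q0: "q \<noteq> 0" using assms(7) q_eq by simp
  have q0': "1 - c^2 \<noteq> 0" using q0 by (simp add: q_def)
  have d: "distinct es" using assms(3) .
  have EE: "set es \<subseteq> {0..<n} \<times> {0..<n}" using assms(1,4) by simp
  have fE: "finite E" using assms(4) by auto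
  have nl: "\<And>x. x \<in> set es \<Longrightarrow> prod.swap x \<noteq> x"
  proof -
    fix x assume x: "x \<in> set es"
    obtain u v where uv: "x = (u,v)" by (cases x)
    have "(u,v) \<in> E" using x uv assms(4) by simp
    hence "u \<noteq> v" using assms(2) by auto
    thus "prod.swap x \<noteq> x" using uv by simp
  qed
  define X where "X = emat es (\<lambda>x z. (if z = x then 1 else 0) + (if z = prod.swap x then c else 0))"
  define Y where "Y = emat es (\<lambda>x z. (if z = x then 1 + c^2/(1-c^2) * (if prod.swap x \<in> set es then 1 else 0) else 0) + (if z = prod.swap x then - c/(1-c^2) else 0))"
  define R where "R = R_mat n es"
  define Lt where "Lt = transpose_mat (L_mat n es)"
  have Rc: "R \<in> carrier_mat ?m n" by (simp add: R_def R_mat_def)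
  have Ltc: "Lt \<in> carrier_mat n ?m" by (simp add: Lt_def L_mat_def)
  have Xc: "X \<in> carrier_mat ?m ?m" by (simp add: X_def)
  have Yc: "Y \<in> carrier_mat ?m ?m" by (simp add: Y_def)
  have Wc: "W_mat n es \<in> carrier_mat ?m ?m" by (rule W_carrier)
  have W: "W_mat n es = R * Lt" by (simp add: W_mat_def R_def Lt_def)
  have XY: "X * Y = 1\<^sub>m ?m" unfolding X_def Y_def by (rule XY_one[OF d nl q0'])

  have Bm: "B_mat n es = emat es (\<lambda>x y. (if snd x = fst y then 1 else 0) - (if y = prod.swap x then 1 else 0))"
    unfolding B_mat_def W_emat[OF EE] Delta_emat[OF EE] emat_minus ..
  have L1: "\<tau> \<cdot>\<^sub>m B_mat n es + (1 - \<tau>) \<cdot>\<^sub>m W_mat n es = emat es (\<lambda>x y. \<tau> * ((if snd x = fst y then 1 else 0) - (if y = prod.swap x then 1 else 0)) + (1 - \<tau>) * (if snd x = fst y then 1 else 0))"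
    unfolding Bm W_emat[OF EE] emat_smult emat_add ..
  have L2: "1\<^sub>m ?m - t \<cdot>\<^sub>m (\<tau> \<cdot>\<^sub>m B_mat n es + (1 - \<tau>) \<cdot>\<^sub>m W_mat n es) = emat es (\<lambda>x y. (if x = y then 1 else 0) - t * (\<tau> * ((if snd x = fst y then 1 else 0) - (if y = prod.swap x then 1 else 0)) + (1 - \<tau>) * (if snd x = fst y then 1 else 0)))"
    unfolding L1 emat_smult emat_one[OF d] emat_minus ..
  have L3: "X - t \<cdot>\<^sub>m W_mat n es = emat es (\<lambda>x y. ((if y = x then 1 else 0) + (if y = prod.swap x then c else 0)) - t * (if snd x = fst y then 1 else 0))"
    unfolding X_def W_emat[OF EE] emat_smult emat_minus ..
  have lhs_eq: "1\<^sub>m ?m - t \<cdot>\<^sub>m (\<tau> \<cdot>\<^sub>m B_mat n es + (1 - \<tau>) \<cdot>\<^sub>m W_mat n es) = X - t \<cdot>\<^sub>m W_mat n es"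
    unfolding L2 L3
    apply (rule emat_cong)
    subgoal premises P for x y
    proof (cases "y = prod.swap x")
      case True
      have s: "snd x = fst y" using True by (cases x) simp
      have xy: "x \<noteq> y" using nl[OF P(1)] True by auto
      show ?thesis using True s xy by (simp add: c_def algebra_simps)
    next
      case False
      show ?thesis using False by (cases "x = y"; cases "snd x = fst y"; simp add: algebra_simps)
    qed
    done

  define M where "M = (t \<cdot>\<^sub>m (Y * R)) * Lt"
  have YRc: "Y * R \<in> carrier_mat ?m n" using Yc Rc by simp
  have Mc: "M \<in> carrier_mat ?m ?m" unfolding M_def by (rule mult_carrier_mat[OF smult_carrier_mat[OF YRc] Ltc])
  have h1: "X * (1\<^sub>m ?m - M) = X * 1\<^sub>m ?m - X * M"
    by (rule mult_minus_distrib_mat[OF Xc]) (use Mc in simp_all)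
  have h2: "M = t \<cdot>\<^sub>m (Y * W_mat n es)"
    unfolding M_def W mult_smult_assoc_mat[OF YRc Ltc] assoc_mult_mat[OF Yc Rc Ltc] ..
  have h3: "X * (t \<cdot>\<^sub>m (Y * W_mat n es)) = t \<cdot>\<^sub>m (X * (Y * W_mat n es))"
    by (rule mult_smult_distrib[OF Xc mult_carrier_mat[OF Yc Wc]])
  have h4: "X * (Y * W_mat n es) = W_mat n es"
  proof -
    have "X * (Y * W_mat n es) = (X * Y) * W_mat n es" by (rule assoc_mult_mat[OF Xc Yc Wc, symmetric])
    also have "\<dots> = 1\<^sub>m ?m * W_mat n es" unfolding XY ..
    also have "\<dots> = W_mat n es" by (rule left_mult_one_mat[OF Wc])
    finally show ?thesis .
  qed
  have h5: "X * 1\<^sub>m ?m = X" using Xc by simp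
  have fact2: "X * (1\<^sub>m ?m - M) = X - t \<cdot>\<^sub>m W_mat n es"
  proof -
    have "X * (1\<^sub>m ?m - M) = X * 1\<^sub>m ?m - X * M" by (rule h1)
    also have "\<dots> = X - X * (t \<cdot>\<^sub>m (Y * W_mat n es))" unfolding h5 h2 ..
    also have "\<dots> = X - t \<cdot>\<^sub>m (X * (Y * W_mat n es))" unfolding h3 ..
    also have "\<dots> = X - t \<cdot>\<^sub>m W_mat n es" unfolding h4 ..
    finally show ?thesis .
  qed

  have Nc: "1\<^sub>m ?m - M \<in> carrier_mat ?m ?m" by (rule minus_carrier_mat[OF Mc])
  have det1: "det (X * (1\<^sub>m ?m - M)) = det X * det (1\<^sub>m ?m - M)"
    by (rule det_mult[OF Xc Nc])
  have syl: "det (1\<^sub>m ?m - M) = det (1\<^sub>m n - Lt * (t \<cdot>\<^sub>m (Y * R)))"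
    unfolding M_def by (rule sylvester_det[OF smult_carrier_mat[OF YRc] Ltc])
  define K where "K = Lt * (Y * R)"
  have Kc: "K \<in> carrier_mat n n" unfolding K_def by (rule mult_carrier_mat[OF Ltc YRc])
  have h6: "Lt * (t \<cdot>\<^sub>m (Y * R)) = t \<cdot>\<^sub>m K"
    unfolding K_def by (rule mult_smult_distrib[OF Ltc YRc])

  define \<alpha> where "\<alpha> = - c/(1-c^2)"
  define \<beta> where "\<beta> = c^2/(1-c^2)"
  have YR: "Y * R = mat ?m n (\<lambda>(e,j). (1 + \<beta> * (if prod.swap (es!e) \<in> set es then 1 else 0)) * (if snd (es!e) = j then 1 else 0)
      + (if prod.swap (es!e) \<in> set es then \<alpha> * (if snd (prod.swap (es!e)) = j then 1 else 0) else 0))"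
    unfolding Y_def R_def R_mat_def \<alpha>_def \<beta>_def
    by (rule emat_mult_row_R[OF d])
  have Kij: "K $$ (i,j) =
        (if (i,j) \<in> E then 1 + (\<tau>*t)^2/(1-(\<tau>*t)^2) * (if (j,i) \<in> E then 1 else 0) else 0)
        + (if i = j then - (\<tau>*t)/(1-(\<tau>*t)^2) * real (card {x\<in>E. fst x = i \<and> prod.swap x \<in> E}) else 0)"
    if i: "i < n" and j: "j < n" for i j
  proof -
    have "K $$ (i,j) = (\<Sum>e<?m. (if fst (es!e) = i then 1 else 0) * ((1 + \<beta> * (if prod.swap (es!e) \<in> set es then 1 else 0)) * (if snd (es!e) = j then 1 else 0)
      + (if prod.swap (es!e) \<in> set es then \<alpha> * (if snd (prod.swap (es!e)) = j then 1 else 0) else 0)))"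
      unfolding K_def YR Lt_def L_mat_def using i j by (simp add: scalar_prod_def atLeast0LessThan)
    also have "\<dots> = (\<Sum>x\<in>set es. (if fst x = i then 1 else 0) * ((1 + \<beta> * (if prod.swap x \<in> set es then 1 else 0)) * (if snd x = j then 1 else 0)
      + (if prod.swap x \<in> set es then \<alpha> * (if snd (prod.swap x) = j then 1 else 0) else 0)))"
      by (rule sum_over_nth[OF d])
    also have "\<dots> = (if (i,j) \<in> E then 1 + \<beta> * (if (j,i) \<in> E then 1 else 0) else 0)
      + (if i = j then \<alpha> * real (card {x\<in>E. fst x = i \<and> prod.swap x \<in> E}) else 0)"
      unfolding assms(4) by (rule K_value[OF fE])
    finally show ?thesis unfolding \<alpha>_def \<beta>_def c_def by simp
  qed
  have Meq: "M_tau n E \<tau> t = (1 - (\<tau>*t)^2) \<cdot>\<^sub>m (1\<^sub>m n - t \<cdot>\<^sub>m K)"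
    by (rule Mtau_eq[OF assms(1) Kc]) (use q0' Kij in \<open>simp_all add: c_def\<close>)
  have detM: "det (M_tau n E \<tau> t) = q ^ n * det (1\<^sub>m n - t \<cdot>\<^sub>m K)"
    unfolding Meq using carrier_matD[OF Kc] by (simp add: q_def c_def)
  have detX0: "det X = (1 - c^2) ^ card {x\<in>set es. fst x < snd x \<and> prod.swap x \<in> set es}"
    unfolding X_def by (rule det_X[OF d nl])
  have detX: "det X = q ^ recip_pairs E"
    unfolding detX0 q_def assms(4) card_recip[OF assms(2) fE] ..
  have lhs: "det (1\<^sub>m ?m - t \<cdot>\<^sub>m (\<tau> \<cdot>\<^sub>m B_mat n es + (1 - \<tau>) \<cdot>\<^sub>m W_mat n es))
     = q ^ recip_pairs E * det (1\<^sub>m n - t \<cdot>\<^sub>m K)"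
    unfolding lhs_eq fact2[symmetric] det1 syl h6 detX ..
  have pw: "q powi (int (recip_pairs E) - int n) * q ^ n = q ^ recip_pairs E"
    using q0 by (simp add: power_int_diff)
  show ?thesis unfolding q_eq lhs detM
    using pw by (simp add: mult.assoc[symmetric])
qed

end
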